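(* Let $N=2$ with $Q=\{A,B\}$. Let $k\ge 5$, $\vec n=(n_1,\dots,n_k)$ a window string with $L\ge n_1\ge\cdots\ge n_k\ge1$, $\vec q\in Q^k$ and $\mu\in\{0,1\}^{k-1}$. Suppose $\vec n$ contains a "5-streak", i.e. there is an index $i$ with $3\le i\le k-2$ and $n_{i-2}=n_{i-1}=n_i=n_{i+1}=n_{i+2}$. Then there exist a window string $\vec n'$ of length $k-2$ obtained from $\vec n$ by deleting two of the entries $n_{i-2},\dots,n_{i+2}$, a qubit string $\vec q'\in Q^{k-2}$, a sign string $\mu'\in\{0,1\}^{k-3}$, and a scalar $c$ not depending on the unitaries $U_1,\dots,U_L$ nor on $\tilde O$, such that $$\mathbf{T}^{(k)}_{\vec q;\mu}(\vec n)=c\,\mathbf{T}^{(k-2)}_{\vec q';\mu'}(\vec n').$$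
   Context: Fix integers $L\ge 1$ and $N\ge 1$, and a set $Q$ of $N$ qubit labels. For $q\in Q$ let $\sigma_z^{[q]}$ denote the Pauli-$Z$ operator acting on qubit $q$ tensored with the identity on all other qubits of $(\mathbb{C}^2)^{\otimes N}$. (Digital control) Let $U_1,\dots,U_L$ be arbitrary unitaries on $(\mathbb{C}^2)^{\otimes N}$ ($U_n$ is the control propagator, constant on the $n$-th time window), and let $\tilde O$ be an arbitrary Hermitian unitary operator on $(\mathbb{C}^2)^{\otimes N}$ (the toggling-frame observable). For $q\in Q$ and $n\in\{1,\dots,L\}$ define $\tilde h_q(n)=U_n^\dagger\sigma_z^{[q]}U_n$ and $\bar h_q(n)=-\tilde O^{-1}\tilde h_q(n)\tilde O$. For $k\ge1$, a window string $\vec n=(n_1,\dots,n_k)$ with $L\ge n_1\ge\cdots\ge n_k\ge1$, a qubit string $\vec q=(q_1,\dots,q_k)\in Q^k$ and a sign string $\mu\in\{0,1\}^{k-1}$, the (window-framed) control tensor is $$\mathbf{T}^{(k)}_{\vec q;\mu}(\vec n)=\sum_{b\in\{0,1\}^k}(-1)^{\sum_{j=1}^{k-1}\mu_j b_{j+1}}\Big(\prod^{\downarrow}_{i:\,b_i=1}\bar h_{q_i}(n_i)\Big)\Big(\prod^{\uparrow}_{i:\,b_i=0}\tilde h_{q_i}(n_i)\Big),$$ where $\prod^{\downarrow}$ is the ordered product with the index $i$ decreasing from left to right, $\prod^{\uparrow}$ is the ordered product with $i$ increasing from left to right, and an empty product is the identity. When $N=1$ the qubit string is omitted and we write $\mathbf{T}^{(k)}_{\mu}(\vec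 n)$. *)

theory Defs
  imports "HOL-Analysis.Analysis"
begin

text \<open>Two-qubit operators: matrices indexed by computational basis states
  (bool \<times> bool); the first component is qubit A, the second qubit B;
  False = |0>, True = |1>.\<close>

type_synonym op2 = "complex ^ (bool \<times> bool) ^ (bool \<times> bool)"

datatype qubit = A | B

definition adj :: "op2 \<Rightarrow> op2" where
  "adj M = (\<chi> i j. cnj (M $ j $ i))"

definition unitary_op :: "op2 \<Rightarrow> bool" where
  "unitary_op U \<longleftrightarrow> adj U ** U = mat 1 \<and> U ** adj U = mat 1"

definition hermitian_op :: "op2 \<Rightarrow> bool" where
  "hermitian_op M \<longleftrightarrow> adj M = M"

definition smul_op :: "complex \<Rightarrow> op2 \<Rightarrow> op2" where
  "smul_op c M = (\<chi> i j. c * M $ i $ j)"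

definition sigma_z :: "qubit \<Rightarrow> op2" where
  "sigma_z q = (\<chi> i j. if i = j then
       (if (case q of A \<Rightarrow> fst i | B \<Rightarrow> snd i) then -1 else 1) else 0)"

definition prod_ops :: "op2 list \<Rightarrow> op2" where
  "prod_ops Ms = foldr (**) Ms (mat 1)"

definition htilde :: "(nat \<Rightarrow> op2) \<Rightarrow> qubit \<Rightarrow> nat \<Rightarrow> op2" where
  "htilde U q m = adj (U m) ** sigma_z q ** U m"

definition hbar :: "(nat \<Rightarrow> op2) \<Rightarrow> op2 \<Rightarrow> qubit \<Rightarrow> nat \<Rightarrow> op2" where
  "hbar U Ot q m = - (matrix_inv Ot ** htilde U q m ** Ot)"

definition window_string :: "nat \<Rightarrow> nat list \<Rightarrow> bool" where
  "window_string L ns \<longleftrightarrow> sorted_wrt (\<ge>) ns \<and> (\<forall>x\<in>set ns. 1 \<le> x \<and> x \<le> L)"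

text \<open>Control tensor T^(k)_{q;mu}(n), k = length ns; lists are 0-based, so the
  sign exponent sum_{j=1}^{k-1} mu_j b_{j+1} becomes sum_{j<k-1} mu!j * b!(j+1);
  True encodes 1.\<close>
definition control_tensor ::
  "(nat \<Rightarrow> op2) \<Rightarrow> op2 \<Rightarrow> nat list \<Rightarrow> qubit list \<Rightarrow> bool list \<Rightarrow> op2" where
  "control_tensor U Ot ns qs mu =
    (let k = length ns in
     \<Sum>b\<in>{b::bool list. length b = k}.
       smul_op ((-1) ^ card {j. j < k - 1 \<and> mu ! j \<and> b ! (j + 1)})
         (prod_ops [hbar U Ot (qs ! i) (ns ! i). i \<leftarrow> rev [0..<k], b ! i] **
          prod_ops [htilde U (qs ! i) (ns ! i). i \<leftarrow> [0..<k], \<not> b ! i]))"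

end

theory Submission
  imports Defs "HOL-Library.Multiset"
begin


lemma mm_rdistrib: "((P::op2) + Q) ** C = P ** C + Q ** C"
  by (simp add: vec_eq_iff matrix_matrix_mult_def distrib_right sum.distrib)
lemma mm_lneg: "(- (P::op2)) ** C = - (P ** C)"
  by (simp add: vec_eq_iff matrix_matrix_mult_def sum_negf)
lemma mm_rneg: "(P::op2) ** (- C) = - (P ** C)"
  by (simp add: vec_eq_iff matrix_matrix_mult_def sum_negf)
lemma mm_assoc: "((P::op2) ** Q) ** C = P ** (Q ** C)"
  by (simp add: matrix_mul_assoc)

lemma smul_mul_r: "smul_op c ((P::op2) ** Q) = P ** smul_op c Q"
  by (simp add: vec_eq_iff matrix_matrix_mult_def smul_op_def sum_distrib_left algebra_simps)
lemma smul_mul_l: "smul_op c ((P::op2) ** Q) = smul_op c P ** Q"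
  by (simp add: vec_eq_iff matrix_matrix_mult_def smul_op_def sum_distrib_left algebra_simps)
lemma smul_add: "smul_op c ((P::op2) + Q) = smul_op c P + smul_op c Q"
  by (simp add: vec_eq_iff smul_op_def algebra_simps)
lemma smul_neg_c: "smul_op (- c) (P::op2) = - smul_op c P"
  by (simp add: vec_eq_iff smul_op_def)
lemma smul_one: "smul_op 1 (P::op2) = P"
  by (simp add: vec_eq_iff smul_op_def)
lemma smul_zero_c: "smul_op 0 (P::op2) = 0"
  by (simp add: vec_eq_iff smul_op_def)
lemma smul_zero: "smul_op c (0::op2) = 0"
  by (simp add: vec_eq_iff smul_op_def)
lemma smul_neg: "smul_op c (- P::op2) = - smul_op c P"
  by (simp add: vec_eq_iff smul_op_def)
lemma smul_four: "smul_op 4 (P::op2) = P + P + P + P"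
  by (simp add: vec_eq_iff smul_op_def)
lemma smul_sum: "finite S \<Longrightarrow> smul_op c (\<Sum>b\<in>S. (F b::op2)) = (\<Sum>b\<in>S. smul_op c (F b))"
  by (induct S rule: finite_induct) (auto simp: smul_zero smul_add)
lemma sum_mm_l: "finite S \<Longrightarrow> (\<Sum>b\<in>S. (M::op2) ** F b) = M ** (\<Sum>b\<in>S. F b)"
  by (induct S rule: finite_induct) (auto simp: matrix_add_ldistrib)
lemma sum_mm_r: "finite S \<Longrightarrow> (\<Sum>b\<in>S. (F b::op2) ** (M::op2)) = (\<Sum>b\<in>S. F b) ** M"
  by (induct S rule: finite_induct) (simp_all add: mm_rdistrib)

lemma UNIV_bb: "(UNIV::(bool\<times>bool) set) = {(False,False),(False,True),(True,False),(True,True)}"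
  by auto

lemma sz_sq: "sigma_z q ** sigma_z q = mat 1"
  by (cases q) (auto simp: vec_eq_iff matrix_matrix_mult_def mat_def sigma_z_def UNIV_bb)
lemma sz_comm: "sigma_z q ** sigma_z r = sigma_z r ** sigma_z q"
  by (cases q; cases r) (auto simp: vec_eq_iff matrix_matrix_mult_def mat_def sigma_z_def UNIV_bb)




definition phi :: "bool \<times> op2 \<times> op2 \<Rightarrow> op2 \<Rightarrow> op2" where
  "phi x Y = (case x of (e,a,t) \<Rightarrow> (if e then - (a ** Y) else a ** Y) + Y ** t)"

lemma phi_smul: "phi x (smul_op c Y) = smul_op c (phi x Y)"
  by (cases x) (auto simp: phi_def smul_add smul_neg simp flip: smul_mul_r smul_mul_l)
lemma phi_zero: "phi x 0 = 0"
  by (cases x) (auto simp: phi_def)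
lemma fold_smul: "fold phi xs (smul_op c Y) = smul_op c (fold phi xs Y)"
  by (induct xs arbitrary: Y) (auto simp: phi_smul)
lemma fold_zero: "fold phi xs 0 = 0"
  by (induct xs) (auto simp: phi_zero)

lemma phi_comm:
  assumes "a1 ** a2 = a2 ** a1" "t1 ** t2 = t2 ** t1"
  shows "phi (e1,a1,t1) (phi (e2,a2,t2) Y) = phi (e2,a2,t2) (phi (e1,a1,t1) Y)"
proof -
  have 1: "a1 ** (a2 ** Z) = a2 ** (a1 ** Z)" for Z
    by (simp add: matrix_mul_assoc assms(1))
  have 2: "Z ** (t2 ** t1) = Z ** (t1 ** t2)" for Z
    by (simp add: assms(2))
  show ?thesis
    by (induct e1; induct e2; simp only: phi_def prod.case if_True if_False matrix_add_ldistrib mm_rdistrib mm_lneg mm_rneg mm_assoc 1 2 minus_minus; simp add: algebra_simps)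
qed

lemma phi_cube:
  assumes "a ** a = mat 1" "t ** t = mat 1"
  shows "phi (e,a,t) (phi (e,a,t) (phi (e,a,t) Y)) = smul_op 4 (phi (e,a,t) Y)"
proof -
  have 1: "a ** (a ** Z) = Z" for Z
    by (simp add: matrix_mul_assoc assms(1))
  show ?thesis
    by (induct e; simp only: phi_def prod.case if_True if_False matrix_add_ldistrib mm_rdistrib mm_lneg mm_rneg mm_assoc 1 assms matrix_mul_rid minus_minus smul_four; simp add: algebra_simps)
qed

lemma phi_annih:
  assumes "a ** a = mat 1" "t ** t = mat 1"
  shows "phi (\<not>e,a,t) (phi (e,a,t) Y) = 0"
proof -
  have 1: "a ** (a ** Z) = Z" for Z
    by (simp add: matrix_mul_assoc assms(1))
  show ?thesis
    by (induct e; simp only: phi_def prod.case if_True if_False not_True_eq_False not_False_eq_True matrix_add_ldistrib mm_rdistrib mm_lneg mm_rneg mm_assoc 1 assms matrix_mul_rid minus_minus; simp add: algebra_simps)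
qed

lemma unitary_inv:
  assumes "unitary_op W"
  shows "matrix_inv W ** W = mat 1" "W ** matrix_inv W = mat 1"
proof -
  have "\<exists>A'. W ** A' = mat 1 \<and> A' ** W = mat 1" using assms unfolding unitary_op_def by blast
  hence "W ** matrix_inv W = mat 1 \<and> matrix_inv W ** W = mat 1"
    unfolding matrix_inv_def by (rule someI_ex)
  thus "matrix_inv W ** W = mat 1" "W ** matrix_inv W = mat 1" by auto
qed

lemma htilde_sq: "unitary_op (U m) \<Longrightarrow> htilde U q m ** htilde U q m = mat 1"
  unfolding htilde_def unitary_op_def
  by (simp add: mm_assoc) (simp add: matrix_mul_assoc sz_sq flip: mm_assoc)

lemma htilde_comm: "unitary_op (U m) \<Longrightarrow> htilde U q m ** htilde U r m = htilde U r m ** htilde U q m"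
  unfolding htilde_def unitary_op_def
  by (simp add: mm_assoc) (simp add: matrix_mul_assoc sz_comm flip: mm_assoc)

lemma hbar_prod: "unitary_op Ot \<Longrightarrow> hbar U Ot q m ** hbar U Ot r m = matrix_inv Ot ** (htilde U q m ** htilde U r m) ** Ot"
  unfolding hbar_def
  by (simp add: mm_lneg mm_rneg mm_assoc) (simp add: matrix_mul_assoc unitary_inv flip: mm_assoc)

lemma hbar_sq: "unitary_op (U m) \<Longrightarrow> unitary_op Ot \<Longrightarrow> hbar U Ot q m ** hbar U Ot q m = mat 1"
  by (simp add: hbar_prod htilde_sq unitary_inv)

lemma hbar_comm: "unitary_op (U m) \<Longrightarrow> unitary_op Ot \<Longrightarrow> hbar U Ot q m ** hbar U Ot r m = hbar U Ot r m ** hbar U Ot q m"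
  by (simp add: hbar_prod htilde_comm)




lemma lc_mf: "[f i. i \<leftarrow> xs, P i] = map f (filter P xs)"
  by (induct xs) auto

lemma prod_ops_Cons: "prod_ops (x # xs) = x ** prod_ops xs"
  by (simp add: prod_ops_def)
lemma prod_ops_append: "prod_ops (xs @ ys) = prod_ops xs ** prod_ops ys"
  by (induct xs) (simp_all add: prod_ops_def mm_assoc)
lemma prod_ops_Nil: "prod_ops [] = mat 1"
  by (simp add: prod_ops_def)

lemma card_snoc:
  assumes "length b = k"
  shows "card {j. j < Suc k \<and> e j \<and> (b @ [\<beta>]) ! j} = card {j. j < k \<and> e j \<and> b ! j} + (if e k \<and> \<beta> then 1 else 0)"
proof -
  have "{j. j < Suc k \<and> e j \<and> (b @ [\<beta>]) ! j} = {j. j < k \<and> e j \<and> b ! j} \<union> (if e k \<and> \<beta> then {k} else {})"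
    using assms by (auto simp: nth_append less_Suc_eq)
  thus ?thesis by (auto simp: card_insert_if)
qed

lemma filt_snoc:
  assumes "length b = k"
  shows "filter (\<lambda>i. (b @ [\<beta>]) ! i) (rev [0..<Suc k]) = (if \<beta> then [k] else []) @ filter (\<lambda>i. b ! i) (rev [0..<k])"
    "filter (\<lambda>i. \<not> (b @ [\<beta>]) ! i) [0..<Suc k] = filter (\<lambda>i. \<not> b ! i) [0..<k] @ (if \<beta> then [] else [k])"
proof -
  have "filter (\<lambda>i. (b @ [\<beta>]) ! i) (rev [0..<k]) = filter (\<lambda>i. b ! i) (rev [0..<k])"
    by (rule filter_cong) (auto simp: assms nth_append)
  thus "filter (\<lambda>i. (b @ [\<beta>]) ! i) (rev [0..<Suc k]) = (if \<beta> then [k] else []) @ filter (\<lambda>i. b ! i) (rev [0..<k])"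
    using assms by (simp add: nth_append)
  have "filter (\<lambda>i. \<not> (b @ [\<beta>]) ! i) [0..<k] = filter (\<lambda>i. \<not> b ! i) [0..<k]"
    by (rule filter_cong) (auto simp: assms nth_append)
  thus "filter (\<lambda>i. \<not> (b @ [\<beta>]) ! i) [0..<Suc k] = filter (\<lambda>i. \<not> b ! i) [0..<k] @ (if \<beta> then [] else [k])"
    using assms by (simp add: nth_append)
qed

lemma lists_Suc: "{b::bool list. length b = Suc k} = (\<lambda>(b,\<beta>). b @ [\<beta>]) ` ({b. length b = k} \<times> UNIV)"
proof -
  have "x \<in> (\<lambda>(b,\<beta>). b @ [\<beta>]) ` ({b. length b = k} \<times> UNIV)" if "length x = Suc k" for x :: "bool list"
  proof -
    have "x = butlast x @ [last x]" using that
      by (metis append_butlast_last_id length_0_conv nat.simps(3))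
    thus ?thesis using that by (intro image_eqI[of _ _ "(butlast x, last x)"]) auto
  qed
  thus ?thesis by auto
qed

lemma S_rec:
  fixes a t :: "nat \<Rightarrow> op2" and e :: "nat \<Rightarrow> bool"
  shows "(\<Sum>b\<in>{b::bool list. length b = k}.
     smul_op ((-1) ^ card {j. j < k \<and> e j \<and> b ! j})
       (prod_ops (map a (filter (\<lambda>i. b ! i) (rev [0..<k]))) ** prod_ops (map t (filter (\<lambda>i. \<not> b ! i) [0..<k]))))
    = fold phi (map (\<lambda>j. (e j, a j, t j)) [0..<k]) (mat 1)"
proof (induct k)
  case 0
  have "{b::bool list. length b = 0} = {[]}" by auto
  thus ?case by (simp add: prod_ops_Nil smul_one)
next
  case (Suc k)
  define S where "S b = smul_op ((-1) ^ card {j. j < k \<and> e j \<and> b ! j})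
       (prod_ops (map a (filter (\<lambda>i. b ! i) (rev [0..<k]))) ** prod_ops (map t (filter (\<lambda>i. \<not> b ! i) [0..<k])))" for b
  have fin: "finite {b::bool list. length b = k}" using finite_lists_length_eq[of "UNIV::bool set" k] by simp
  have inj: "inj_on (\<lambda>(b,\<beta>). b @ [\<beta>]) ({b::bool list. length b = k} \<times> UNIV)"
    by (auto simp: inj_on_def)
  define G where "G b = smul_op ((-1) ^ card {j. j < Suc k \<and> e j \<and> b ! j})
       (prod_ops (map a (filter (\<lambda>i. b ! i) (rev [0..<Suc k]))) ** prod_ops (map t (filter (\<lambda>i. \<not> b ! i) [0..<Suc k])))" for b
  have T: "G (b @ [True]) = (if e k then - (a k ** S b) else a k ** S b)" if "length b = k" for b
    unfolding G_def S_def filt_snoc[OF that] card_snoc[OF that]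
    by (simp add: prod_ops_Cons mm_assoc smul_neg_c smul_mul_r mm_rneg)
  have F: "G (b @ [False]) = S b ** t k" if "length b = k" for b
    unfolding G_def S_def filt_snoc[OF that] card_snoc[OF that]
    by (simp add: prod_ops_append prod_ops_Cons prod_ops_Nil mm_assoc smul_mul_l flip: mm_assoc)
  have "(\<Sum>b\<in>{b::bool list. length b = Suc k}. G b) = (\<Sum>x\<in>{b::bool list. length b = k} \<times> UNIV. G ((\<lambda>(b,\<beta>). b @ [\<beta>]) x))"
    unfolding lists_Suc using sum.reindex[OF inj, of G] by (simp add: comp_def)
  also have "\<dots> = (\<Sum>b\<in>{b::bool list. length b = k}. \<Sum>\<beta>\<in>UNIV. G (b @ [\<beta>]))"
    by (simp add: sum.cartesian_product split_def)
  also have "\<dots> = (\<Sum>b\<in>{b::bool list. length b = k}. (if e k then - (a k ** S b) else a k ** S b) + S b ** t k)"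
    by (rule sum.cong) (simp_all add: UNIV_bool T F add.commute)
  also have "\<dots> = phi (e k, a k, t k) (\<Sum>b\<in>{b::bool list. length b = k}. S b)"
    by (simp add: phi_def sum.distrib sum_negf sum_mm_l[OF fin] sum_mm_r[OF fin])
  finally show ?case using Suc unfolding G_def S_def by simp
qed

definition item :: "(nat \<Rightarrow> op2) \<Rightarrow> op2 \<Rightarrow> nat list \<Rightarrow> qubit list \<Rightarrow> bool list \<Rightarrow> nat \<Rightarrow> bool \<times> op2 \<times> op2" where
  "item U Ot ns qs mu j = (0 < j \<and> mu ! (j - 1), hbar U Ot (qs ! j) (ns ! j), htilde U (qs ! j) (ns ! j))"

lemma card_shift: "card {j. j < k - 1 \<and> mu ! j \<and> b ! (j + 1)} = card {j. j < k \<and> (0 < j \<and> mu ! (j - 1)) \<and> b ! j}"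
proof -
  have "{j. j < k \<and> (0 < j \<and> mu ! (j - 1)) \<and> b ! j} = Suc ` {j. j < k - 1 \<and> mu ! j \<and> b ! (j + 1)}"
    by (auto simp: image_iff) (metis Suc_pred' less_diff_conv add_0 Suc_eq_plus1 diff_Suc_1)
  thus ?thesis by (simp add: card_image)
qed

lemma ct_fold: "control_tensor U Ot ns qs mu = fold phi (map (item U Ot ns qs mu) [0..<length ns]) (mat 1)"
proof -
  have "control_tensor U Ot ns qs mu = (\<Sum>b\<in>{b::bool list. length b = length ns}.
     smul_op ((-1) ^ card {j. j < length ns \<and> (0 < j \<and> mu ! (j - 1)) \<and> b ! j})
       (prod_ops (map (\<lambda>i. hbar U Ot (qs ! i) (ns ! i)) (filter (\<lambda>i. b ! i) (rev [0..<length ns]))) **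
        prod_ops (map (\<lambda>i. htilde U (qs ! i) (ns ! i)) (filter (\<lambda>i. \<not> b ! i) [0..<length ns]))))"
    unfolding control_tensor_def Let_def lc_mf card_shift ..
  also have "\<dots> = fold phi (map (item U Ot ns qs mu) [0..<length ns]) (mat 1)"
    unfolding S_rec item_def ..
  finally show ?thesis .
qed




lemma pig:
  fixes q :: "nat \<Rightarrow> qubit"
  shows "\<exists>p r s. p < r \<and> r < s \<and> s < 5 \<and> q p = q r \<and> q r = q s"
proof -
  define S where "S = {(0::nat,1::nat,2::nat),(0,1,3),(0,1,4),(0,2,3),(0,2,4),(0,3,4),(1,2,3),(1,2,4),(1,3,4),(2,3,4)}"
  have o: "\<forall>(p,r,s)\<in>S. p < r \<and> r < s \<and> s < 5" unfolding S_def by simp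
  have "\<exists>(p,r,s)\<in>{(0::nat,1::nat,2::nat),(0,1,3),(0,1,4),(0,2,3),(0,2,4),(0,3,4),(1,2,3),(1,2,4),(1,3,4),(2,3,4)}.
          q p = q r \<and> q r = q s"
    by (cases "q 0"; cases "q 1"; cases "q 2"; cases "q 3"; cases "q 4") auto
  then obtain t where t: "t \<in> S" "case t of (p,r,s) \<Rightarrow> q p = q r \<and> q r = q s" unfolding S_def by (rule bexE)
  obtain p r s where ts: "t = (p,r,s)" by (cases t) auto
  have "p < r \<and> r < s \<and> s < 5" using o t(1) unfolding ts by auto
  thus ?thesis using t(2) unfolding ts by auto
qed

lemma comb:
  fixes f :: "nat \<Rightarrow> qubit \<times> bool"
  shows "(\<exists>p r s. p < r \<and> r < s \<and> s < 5 \<and> f p = f r \<and> f r = f s) \<or>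
         (\<exists>p r. p < 5 \<and> r < 5 \<and> fst (f p) = fst (f r) \<and> snd (f p) \<noteq> snd (f r))"
proof (rule disjCI)
  assume "\<not> (\<exists>p r. p < 5 \<and> r < 5 \<and> fst (f p) = fst (f r) \<and> snd (f p) \<noteq> snd (f r))"
  hence H: "p < 5 \<Longrightarrow> r < 5 \<Longrightarrow> fst (f p) = fst (f r) \<Longrightarrow> f p = f r" for p r
  proof -
    assume a: "p < 5" "r < 5" "fst (f p) = fst (f r)"
    have "snd (f p) = snd (f r)" using a \<open>\<not> _\<close> by blast
    thus "f p = f r" using a(3) by (simp add: prod_eq_iff)
  qed
  obtain p r s where "p < r" "r < s" "s < 5" "fst (f p) = fst (f r)" "fst (f r) = fst (f s)"
    using pig[of "\<lambda>d. fst (f d)"] by blast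
  thus "\<exists>p r s. p < r \<and> r < s \<and> s < 5 \<and> f p = f r \<and> f r = f s"
    using H by (intro exI[of _ p] exI[of _ r] exI[of _ s]) auto
qed




lemma split_upt: "s0 + 5 \<le> k \<Longrightarrow> [0..<k] = [0..<s0] @ [s0..<s0+5] @ [s0+5..<k]"
proof -
  assume a: "s0 + 5 \<le> k"
  have 1: "[0..<k] = [0..<s0+5] @ [s0+5..<k]" using upt_add_eq_append[of 0 "s0+5" "k-(s0+5)"] a by simp
  have 2: "[0..<s0+5] = [0..<s0] @ [s0..<s0+5]" using upt_add_eq_append[of 0 s0 5] by simp
  show ?thesis unfolding 1 2 by simp
qed

lemma filter_split:
  assumes "s0 + 5 \<le> k" "\<And>j. j < s0 \<or> s0 + 5 \<le> j \<Longrightarrow> P j"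
  shows "filter P [0..<k] = [0..<s0] @ filter P [s0..<s0+5] @ [s0+5..<k]"
proof -
  have "filter P [0..<s0] = [0..<s0]" using assms(2) by (auto intro: filter_True)
  moreover have "filter P [s0+5..<k] = [s0+5..<k]" using assms(2) by (auto intro: filter_True)
  ultimately show ?thesis by (subst split_upt[OF assms(1)]) simp
qed

lemma fold_eq_mset:
  fixes s0 :: nat
  assumes comm: "\<And>j j'. s0 \<le> j \<Longrightarrow> j < s0+5 \<Longrightarrow> s0 \<le> j' \<Longrightarrow> j' < s0+5 \<Longrightarrow>
                 phi (it j) \<circ> phi (it j') = phi (it j') \<circ> phi (it j)"
    and sub: "set xs \<subseteq> {s0..<s0+5}" and m: "mset xs = mset ys"
  shows "fold phi (map it xs) = fold phi (map it ys)"
proof (rule fold_multiset_equiv)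
  show "mset (map it xs) = mset (map it ys)" using m by simp
  fix x y assume "x \<in> set (map it xs)" "y \<in> set (map it xs)"
  then obtain j j' where "j \<in> set xs" "j' \<in> set xs" "x = it j" "y = it j'" by auto
  moreover have "s0 \<le> j \<and> j < s0+5 \<and> s0 \<le> j' \<and> j' < s0+5" using calculation sub by auto
  ultimately show "phi x \<circ> phi y = phi y \<circ> phi x" using comm[of j j'] by auto
qed

lemma core_triple:
  fixes it :: "nat \<Rightarrow> bool \<times> op2 \<times> op2"
  assumes comm: "\<And>j j'. s0 \<le> j \<Longrightarrow> j < s0+5 \<Longrightarrow> s0 \<le> j' \<Longrightarrow> j' < s0+5 \<Longrightarrow>
                 phi (it j) \<circ> phi (it j') = phi (it j') \<circ> phi (it j)"
    and ord: "p < r" "r < s" "s < 5"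
    and eq: "it (s0+r) = it (s0+p)" "it (s0+s) = it (s0+p)"
    and cube: "\<And>Y. phi (it (s0+p)) (phi (it (s0+p)) (phi (it (s0+p)) Y)) = smul_op 4 (phi (it (s0+p)) Y)"
    and k: "s0 + 5 \<le> k"
  shows "fold phi (map it [0..<k]) Y = smul_op 4 (fold phi (map it (filter (\<lambda>j. j \<noteq> s0+r \<and> j \<noteq> s0+s) [0..<k])) Y)"
proof -
  define P where "P = (\<lambda>j. j \<noteq> s0+r \<and> j \<noteq> s0+s)"
  define R where "R = filter (\<lambda>j. j \<notin> {s0+p, s0+r, s0+s}) [s0..<s0+5]"
  have m1: "mset [s0..<s0+5] = mset ([s0+p, s0+r, s0+s] @ R)"
    by (rule set_eq_iff_mset_eq_distinct[THEN iffD1]) (use ord in \<open>auto simp: R_def\<close>)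
  have m2: "mset (filter P [s0..<s0+5]) = mset ([s0+p] @ R)"
    by (rule set_eq_iff_mset_eq_distinct[THEN iffD1]) (use ord in \<open>auto simp: R_def P_def\<close>)
  have mid: "fold phi (map it [s0..<s0+5]) Z = smul_op 4 (fold phi (map it (filter P [s0..<s0+5])) Z)" for Z
  proof -
    have "fold phi (map it [s0..<s0+5]) Z = fold phi (map it ([s0+p, s0+r, s0+s] @ R)) Z"
      by (rule fun_cong[OF fold_eq_mset[OF comm _ m1]]) auto
    also have "\<dots> = fold phi (map it R) (phi (it (s0+p)) (phi (it (s0+p)) (phi (it (s0+p)) Z)))"
      using eq by simp
    also have "\<dots> = smul_op 4 (fold phi (map it R) (phi (it (s0+p)) Z))"
      by (simp add: cube fold_smul)
    also have "fold phi (map it R) (phi (it (s0+p)) Z) = fold phi (map it ([s0+p] @ R)) Z"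
      by simp
    also have "\<dots> = fold phi (map it (filter P [s0..<s0+5])) Z"
      by (rule fun_cong[OF fold_eq_mset[OF comm _ m2[symmetric]]]) (use ord in \<open>auto simp: R_def\<close>)
    finally show ?thesis .
  qed
  have fs: "filter P [0..<k] = [0..<s0] @ filter P [s0..<s0+5] @ [s0+5..<k]"
    by (rule filter_split[OF k]) (use ord in \<open>auto simp: P_def\<close>)
  show ?thesis
    unfolding P_def[symmetric] fs
    by (subst split_upt[OF k]) (simp add: mid fold_smul)
qed

lemma core_zero:
  fixes it :: "nat \<Rightarrow> bool \<times> op2 \<times> op2"
  assumes comm: "\<And>j j'. s0 \<le> j \<Longrightarrow> j < s0+5 \<Longrightarrow> s0 \<le> j' \<Longrightarrow> j' < s0+5 \<Longrightarrow>
                 phi (it j) \<circ> phi (it j') = phi (it j') \<circ> phi (it j)"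
    and ord: "p < 5" "r < 5" "p \<noteq> r"
    and ann: "\<And>Y. phi (it (s0+r)) (phi (it (s0+p)) Y) = 0"
    and k: "s0 + 5 \<le> k"
  shows "fold phi (map it [0..<k]) Y = 0"
proof -
  define R where "R = filter (\<lambda>j. j \<notin> {s0+p, s0+r}) [s0..<s0+5]"
  have m1: "mset [s0..<s0+5] = mset ([s0+p, s0+r] @ R)"
    by (rule set_eq_iff_mset_eq_distinct[THEN iffD1]) (use ord in \<open>auto simp: R_def\<close>)
  have mid: "fold phi (map it [s0..<s0+5]) Z = 0" for Z
  proof -
    have "fold phi (map it [s0..<s0+5]) Z = fold phi (map it ([s0+p, s0+r] @ R)) Z"
      by (rule fun_cong[OF fold_eq_mset[OF comm _ m1]]) auto
    also have "\<dots> = 0" by (simp add: ann fold_zero)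
    finally show ?thesis .
  qed
  show ?thesis
    by (subst split_upt[OF k]) (simp add: mid fold_zero)
qed




lemma reindex:
  fixes j1 j2 k :: nat
  assumes "0 < j1" "j1 < j2" "j2 < k"
  shows "length (filter (\<lambda>j. j \<noteq> j1 \<and> j \<noteq> j2) [0..<k]) = k - 2"
    and "map (item U Ot (map (nth ns) (filter (\<lambda>j. j \<noteq> j1 \<and> j \<noteq> j2) [0..<k]))
                        (map (nth qs) (filter (\<lambda>j. j \<noteq> j1 \<and> j \<noteq> j2) [0..<k]))
                        (map (\<lambda>j. mu ! (j - 1)) (tl (filter (\<lambda>j. j \<noteq> j1 \<and> j \<noteq> j2) [0..<k])))) [0..<k-2]
         = map (item U Ot ns qs mu) (filter (\<lambda>j. j \<noteq> j1 \<and> j \<noteq> j2) [0..<k])"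
proof -
  define idx where "idx = filter (\<lambda>j. j \<noteq> j1 \<and> j \<noteq> j2) [0..<k]"
  define idx1 where "idx1 = filter (\<lambda>j. j \<noteq> j1 \<and> j \<noteq> j2) [1..<k]"
  have idx_eq: "idx = 0 # idx1"
    unfolding idx_def idx1_def using assms by (simp add: upt_conv_Cons)
  have "set idx = {0..<k} - {j1, j2}" unfolding idx_def by auto
  moreover have "distinct idx" unfolding idx_def by simp
  ultimately have len: "length idx = k - 2"
  proof -
    have "length idx = card (set idx)" using \<open>distinct idx\<close> by (simp add: distinct_card)
    also have "\<dots> = card {0..<k} - card {j1, j2}"
      unfolding \<open>set idx = _\<close> using assms by (intro card_Diff_subset) auto
    also have "\<dots> = k - 2" using assms by simp
    finally show ?thesis .
  qed
  show "length idx = k - 2" by (rule len)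
  show "map (item U Ot (map (nth ns) idx) (map (nth qs) idx) (map (\<lambda>j. mu ! (j - 1)) (tl idx))) [0..<k-2]
         = map (item U Ot ns qs mu) idx"
  proof (rule nth_equalityI)
    show "length (map (item U Ot (map (nth ns) idx) (map (nth qs) idx) (map (\<lambda>j. mu ! (j - 1)) (tl idx))) [0..<k-2]) = length (map (item U Ot ns qs mu) idx)"
      using len by simp
    fix j' assume "j' < length (map (item U Ot (map (nth ns) idx) (map (nth qs) idx) (map (\<lambda>j. mu ! (j - 1)) (tl idx))) [0..<k-2])"
    hence j': "j' < length idx" using len by simp
    show "map (item U Ot (map (nth ns) idx) (map (nth qs) idx) (map (\<lambda>j. mu ! (j - 1)) (tl idx))) [0..<k-2] ! j' = map (item U Ot ns qs mu) idx ! j'"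
    proof (cases j')
      case 0
      thus ?thesis using j' len by (simp add: item_def idx_eq)
    next
      case (Suc m)
      have m: "m < length idx1" using j' Suc idx_eq by simp
      have pos: "0 < idx1 ! m" using nth_mem[OF m] unfolding idx1_def by auto
      show ?thesis using j' len Suc m pos by (simp add: item_def idx_eq)
    qed
  qed
qed




theorem proposition2:
  fixes L k i :: nat and ns :: "nat list" and qs :: "qubit list" and mu :: "bool list"
  assumes "L \<ge> 1" and "k \<ge> 5"
    and "length ns = k" and "window_string L ns"
    and "length qs = k" and "length mu = k - 1"
    and "2 \<le> i" and "i + 2 < k"
    and "\<forall>j\<in>{i - 2..i + 2}. ns ! j = ns ! i"
  shows "\<exists>ns' qs' mu' (c::complex).
           (\<exists>j1 j2. i - 2 \<le> j1 \<and> j1 < j2 \<and> j2 \<le> i + 2 \<and>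
                    ns' = [ns ! j. j \<leftarrow> [0..<k], j \<noteq> j1 \<and> j \<noteq> j2]) \<and>
           length qs' = k - 2 \<and> length mu' = k - 3 \<and>
           (\<forall>(U::nat \<Rightarrow> op2) (Ot::op2).
              (\<forall>m\<in>{1..L}. unitary_op (U m)) \<longrightarrow> hermitian_op Ot \<longrightarrow> unitary_op Ot \<longrightarrow>
              control_tensor U Ot ns qs mu = smul_op c (control_tensor U Ot ns' qs' mu'))"
proof -
  define s0 where "s0 = i - 2"
  define n where "n = ns ! i"
  have k5: "s0 + 5 \<le> k" using assms(7) assms(8) unfolding s0_def by linarith
  have nL: "n \<in> {1..L}"
  proof -
    have "ns ! i \<in> set ns" using assms(3) assms(8) by simp
    thus ?thesis using assms(4) unfolding window_string_def n_def by simp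
  qed
  define f where "f d = (qs ! (s0 + d), 0 < s0 + d \<and> mu ! (s0 + d - 1))" for d
  have itS: "item U Ot ns qs mu (s0 + d) = (snd (f d), hbar U Ot (fst (f d)) n, htilde U (fst (f d)) n)"
    if "d < 5" for U Ot d
  proof -
    have "s0 + d \<in> {i - 2..i + 2}" unfolding s0_def atLeastAtMost_iff using that assms(7) by linarith
    hence "ns ! (s0 + d) = n" using assms(9) unfolding n_def by blast
    thus ?thesis by (simp add: item_def f_def)
  qed
  have comm: "phi (item U Ot ns qs mu j) \<circ> phi (item U Ot ns qs mu j') = phi (item U Ot ns qs mu j') \<circ> phi (item U Ot ns qs mu j)"
    if "s0 \<le> j" "j < s0 + 5" "s0 \<le> j'" "j' < s0 + 5" "unitary_op (U n)" "unitary_op Ot" for U Ot j j'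
  proof -
    define d where "d = j - s0"
    define d' where "d' = j' - s0"
    have a: "j = s0 + d" "j' = s0 + d'" "d < 5" "d' < 5" using that unfolding d_def d'_def by auto
    show ?thesis
      unfolding a(1,2) itS[OF a(3)] itS[OF a(4)]
      by (rule ext, simp add: phi_comm hbar_comm htilde_comm that)
  qed
  have lc: "[ns ! j. j \<leftarrow> [0..<k], j \<noteq> j1 \<and> j \<noteq> j2] = map (nth ns) (filter (\<lambda>j. j \<noteq> j1 \<and> j \<noteq> j2) [0..<k])" for j1 j2
    by (simp add: lc_mf)
  consider (tri) p r s where "p < r" "r < s" "s < 5" "f p = f r" "f r = f s"
    | (zero) p r where "p < 5" "r < 5" "fst (f p) = fst (f r)" "snd (f p) \<noteq> snd (f r)"
    using comb[of f] by blast
  thus ?thesis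
  proof cases
    case tri
    define j1 where "j1 = s0 + r"
    define j2 where "j2 = s0 + s"
    define idx where "idx = filter (\<lambda>j. j \<noteq> j1 \<and> j \<noteq> j2) [0..<k]"
    have j: "0 < j1" "j1 < j2" "j2 < k" using tri k5 unfolding j1_def j2_def by auto
    have len: "length idx = k - 2" unfolding idx_def by (rule reindex(1)[OF j])
    have main: "control_tensor U Ot ns qs mu = smul_op 4 (control_tensor U Ot (map (nth ns) idx) (map (nth qs) idx) (map (\<lambda>j. mu ! (j - 1)) (tl idx)))"
      if U: "\<forall>m\<in>{1..L}. unitary_op (U m)" and O: "unitary_op Ot" for U Ot
    proof -
      have Un: "unitary_op (U n)" using U nL by blast
      have commU: "\<And>j j'. s0 \<le> j \<Longrightarrow> j < s0+5 \<Longrightarrow> s0 \<le> j' \<Longrightarrow> j' < s0+5 \<Longrightarrow>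
          phi (item U Ot ns qs mu j) \<circ> phi (item U Ot ns qs mu j') = phi (item U Ot ns qs mu j') \<circ> phi (item U Ot ns qs mu j)"
        using comm Un O by blast
      have e1: "item U Ot ns qs mu (s0 + r) = item U Ot ns qs mu (s0 + p)"
        using tri by (simp add: itS)
      have e2: "item U Ot ns qs mu (s0 + s) = item U Ot ns qs mu (s0 + p)"
        using tri by (simp add: itS)
      have cube: "phi (item U Ot ns qs mu (s0+p)) (phi (item U Ot ns qs mu (s0+p)) (phi (item U Ot ns qs mu (s0+p)) Y))
                  = smul_op 4 (phi (item U Ot ns qs mu (s0+p)) Y)" for Y
        using tri by (simp add: itS phi_cube hbar_sq htilde_sq Un O)
      have "control_tensor U Ot ns qs mu = fold phi (map (item U Ot ns qs mu) [0..<k]) (mat 1)"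
        using ct_fold assms(3) by simp
      also have "\<dots> = smul_op 4 (fold phi (map (item U Ot ns qs mu) idx) (mat 1))"
        unfolding idx_def j1_def j2_def
        by (rule core_triple[OF commU tri(1,2,3) e1 e2 cube k5])
      also have "map (item U Ot ns qs mu) idx = map (item U Ot (map (nth ns) idx) (map (nth qs) idx) (map (\<lambda>j. mu ! (j - 1)) (tl idx))) [0..<k-2]"
        unfolding idx_def by (rule reindex(2)[OF j, symmetric])
      also have "fold phi \<dots> (mat 1) = control_tensor U Ot (map (nth ns) idx) (map (nth qs) idx) (map (\<lambda>j. mu ! (j - 1)) (tl idx))"
        using ct_fold len by simp
      finally show ?thesis .
    qed
    show ?thesis
      apply (rule exI[of _ "map (nth ns) idx"], rule exI[of _ "map (nth qs) idx"],
             rule exI[of _ "map (\<lambda>j. mu ! (j - 1)) (tl idx)"], rule exI[of _ 4])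
    proof (intro conjI allI impI)
      show "\<exists>j1 j2. i - 2 \<le> j1 \<and> j1 < j2 \<and> j2 \<le> i + 2 \<and> map (nth ns) idx = [ns ! j. j \<leftarrow> [0..<k], j \<noteq> j1 \<and> j \<noteq> j2]"
        using tri assms(7) unfolding lc idx_def j1_def j2_def s0_def
        by (intro exI[of _ "i - 2 + r"] exI[of _ "i - 2 + s"] conjI refl) linarith+
      show "length (map (nth qs) idx) = k - 2" using len by simp
      show "length (map (\<lambda>j. mu ! (j - 1)) (tl idx)) = k - 3" using len by simp
      fix U Ot assume "\<forall>m\<in>{1..L}. unitary_op (U m)" "hermitian_op Ot" "unitary_op Ot"
      thus "control_tensor U Ot ns qs mu = smul_op 4 (control_tensor U Ot (map (nth ns) idx) (map (nth qs) idx) (map (\<lambda>j. mu ! (j - 1)) (tl idx)))"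
        using main by blast
    qed
  next
    case zero
    have main: "control_tensor U Ot ns qs mu = 0"
      if U: "\<forall>m\<in>{1..L}. unitary_op (U m)" and O: "unitary_op Ot" for U Ot
    proof -
      have Un: "unitary_op (U n)" using U nL by blast
      have commU: "\<And>j j'. s0 \<le> j \<Longrightarrow> j < s0+5 \<Longrightarrow> s0 \<le> j' \<Longrightarrow> j' < s0+5 \<Longrightarrow>
          phi (item U Ot ns qs mu j) \<circ> phi (item U Ot ns qs mu j') = phi (item U Ot ns qs mu j') \<circ> phi (item U Ot ns qs mu j)"
        using comm Un O by blast
      have pr: "p \<noteq> r" using zero by auto
      have ann: "phi (item U Ot ns qs mu (s0 + r)) (phi (item U Ot ns qs mu (s0 + p)) Y) = 0" for Y
      proof -
        have "snd (f r) = (\<not> snd (f p))" using zero by auto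
        thus ?thesis using zero by (simp add: itS phi_annih hbar_sq htilde_sq Un O)
      qed
      have "control_tensor U Ot ns qs mu = fold phi (map (item U Ot ns qs mu) [0..<k]) (mat 1)"
        using ct_fold assms(3) by simp
      also have "\<dots> = 0"
        by (rule core_zero[OF commU zero(1,2) pr ann k5])
      finally show ?thesis .
    qed
    show ?thesis
      apply (rule exI[of _ "[ns ! j. j \<leftarrow> [0..<k], j \<noteq> i - 1 \<and> j \<noteq> i]"], rule exI[of _ "replicate (k - 2) A"],
             rule exI[of _ "replicate (k - 3) False"], rule exI[of _ 0])
    proof (intro conjI allI impI)
      show "\<exists>j1 j2. i - 2 \<le> j1 \<and> j1 < j2 \<and> j2 \<le> i + 2 \<and>
          [ns ! j. j \<leftarrow> [0..<k], j \<noteq> i - 1 \<and> j \<noteq> i] = [ns ! j. j \<leftarrow> [0..<k], j \<noteq> j1 \<and> j \<noteq> j2]"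
        using assms(7) by (intro exI[of _ "i - 1"] exI[of _ i]) simp
      show "length (replicate (k - 2) A) = k - 2" by simp
      show "length (replicate (k - 3) False) = k - 3" by simp
      fix U Ot assume "\<forall>m\<in>{1..L}. unitary_op (U m)" "hermitian_op Ot" "unitary_op Ot"
      thus "control_tensor U Ot ns qs mu = smul_op 0 (control_tensor U Ot [ns ! j. j \<leftarrow> [0..<k], j \<noteq> i - 1 \<and> j \<noteq> i] (replicate (k - 2) A) (replicate (k - 3) False))"
        using main by (simp add: smul_zero_c)
    qed
  qed
qed


end
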